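(* Let $\mathcal G$ be a graph on $n$ vertices in which every vertex has the same degree $r$, and let $\mathcal C\subseteq\{0,1\}^n$ be a binary code with $|\mathcal C|\ge 2$. Then the distance of the CWS code $\mathcal Q=(\mathcal G,\mathcal C)$ is at most $r+1$.
   Context: A Pauli operator on $n$ qubits is, up to a phase, $X^{\mathbf v}Z^{\mathbf u}=X_1^{v_1}\cdots X_n^{v_n}Z_1^{u_1}\cdots Z_n^{u_n}$ with $\mathbf v,\mathbf u\in\{0,1\}^n$; its weight is the number of qubits on which it acts as a non-identity operator. For a subspace $\mathcal Q\subseteq(\mathbb C^2)^{\otimes n}$ with orthonormal basis $\{|i\rangle\}$, a Pauli operator $E$ is detectable if $\langle j|E|i\rangle=C_E\delta_{ij}$ for all $i,j$, with $C_E$ independent of $i,j$; the distance of $\mathcal Q$ is the smallest weight of a non-detectable Pauli operator. Let $\mathcal G$ be a simple graph on vertex set $\{1,\dots,n\}$ with adjacency matrix $R\in\{0,1\}^{n\times n}$ (symmetric, zero diagonal) and rows $\mathbf r_i$. The graph-stabilizer generators are $S_i=X_iZ^{\mathbf r_i}$, $i=1,\dots,n$; they commute, generate an abelian group $\mathscr S_{\mathcal G}$, and stabilize a unique (up to phase) state $|s\rangle$, the graph state. For a binary code $\mathcal C\subseteq\{0,1\}^n$ with $K$ words, the CWS code in standard form is $\mathcal Q=(\mathcal G,\mathcal C)=\operatorname{span}\{Z^{\mathbf c}|s\rangle:\mathbf c\in\mathcal C\}$; it has dimension $K$. *)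

theory Defs
  imports Complex_Main "HOL-Library.Extended_Nat"
begin

text \<open>Qubits are indexed by a finite type 'n (n = CARD('n)); computational basis
  states are bit strings 'n \<Rightarrow> bool; n-qubit states are functions from bit strings
  to complex amplitudes.\<close>

type_synonym 'n state = "('n \<Rightarrow> bool) \<Rightarrow> complex"

definition bxor :: "('n \<Rightarrow> bool) \<Rightarrow> ('n \<Rightarrow> bool) \<Rightarrow> ('n \<Rightarrow> bool)" where
  "bxor a b = (\<lambda>i. a i \<noteq> b i)"

definition sign_dot :: "('n::finite \<Rightarrow> bool) \<Rightarrow> ('n \<Rightarrow> bool) \<Rightarrow> complex" where
  "sign_dot u x = (if odd (card {i. u i \<and> x i}) then -1 else 1)"

text \<open>The Pauli operator X^v Z^u: X^v Z^u |x> = (-1)^(u.x) |x + v>.\<close>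
definition pauli :: "('n::finite \<Rightarrow> bool) \<Rightarrow> ('n \<Rightarrow> bool) \<Rightarrow> 'n state \<Rightarrow> 'n state" where
  "pauli v u \<psi> = (\<lambda>y. sign_dot u (bxor y v) * \<psi> (bxor y v))"

definition pauli_weight :: "('n::finite \<Rightarrow> bool) \<Rightarrow> ('n \<Rightarrow> bool) \<Rightarrow> nat" where
  "pauli_weight v u = card {i. v i \<or> u i}"

definition qinner :: "'n::finite state \<Rightarrow> 'n state \<Rightarrow> complex" where
  "qinner \<phi> \<psi> = (\<Sum>x\<in>UNIV. cnj (\<phi> x) * \<psi> x)"

text \<open>Detectability of E for a subspace Q (basis-free form of
  <j|E|i> = C_E \<delta>_ij for an orthonormal basis).\<close>
definition detectable :: "'n::finite state set \<Rightarrow> ('n state \<Rightarrow> 'n state) \<Rightarrow> bool" where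
  "detectable Q E \<longleftrightarrow> (\<exists>c. \<forall>\<phi>\<in>Q. \<forall>\<psi>\<in>Q. qinner \<phi> (E \<psi>) = c * qinner \<phi> \<psi>)"

definition qdistance :: "'n::finite state set \<Rightarrow> enat" where
  "qdistance Q = Inf {enat (pauli_weight v u) | v u. \<not> detectable Q (pauli v u)}"

definition graph_stab :: "('n::finite \<Rightarrow> 'n \<Rightarrow> bool) \<Rightarrow> 'n \<Rightarrow> 'n state \<Rightarrow> 'n state" where
  "graph_stab R i = pauli (\<lambda>j. j = i) (R i)"

definition is_graph_state :: "('n::finite \<Rightarrow> 'n \<Rightarrow> bool) \<Rightarrow> 'n state \<Rightarrow> bool" where
  "is_graph_state R s \<longleftrightarrow> s \<noteq> (\<lambda>_. 0) \<and> (\<forall>i. graph_stab R i s = s)"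

text \<open>CWS code in standard form: span{Z^c |s> : c \<in> C}.\<close>
definition cws_code :: "('n::finite \<Rightarrow> 'n \<Rightarrow> bool) \<Rightarrow> 'n state \<Rightarrow> ('n \<Rightarrow> bool) set \<Rightarrow> 'n state set" where
  "cws_code R s C = {(\<lambda>x. \<Sum>c\<in>C. a c * pauli (\<lambda>_. False) c s x) | a. True}"

end

theory Submission
  imports Defs
begin

lemma sign_dot_flip:
  fixes c y :: "'n::finite \<Rightarrow> bool"
  shows "sign_dot c (bxor y (\<lambda>j. j = i)) = (if c i then -1 else 1) * sign_dot c y"
proof -
  let ?A = "{j. c j \<and> y j}"
  let ?B = "{j. c j \<and> bxor y (\<lambda>j. j = i) j}"
  show ?thesis
  proof (cases "c i")
    case False
    hence "?B = ?A" by (auto simp: bxor_def)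
    thus ?thesis using False by (simp add: sign_dot_def)
  next
    case True
    show ?thesis
    proof (cases "y i")
      case yt: True
      hence "?B = ?A - {i}" using True by (auto simp: bxor_def)
      moreover have "i \<in> ?A" using True yt by simp
      ultimately have "card ?B + 1 = card ?A"
        by (metis (no_types, lifting) One_nat_def Suc_eq_plus1 card_Suc_Diff1 finite)
      hence "odd (card ?B) \<longleftrightarrow> even (card ?A)" by (metis even_Suc Suc_eq_plus1)
      hence "sign_dot c (bxor y (\<lambda>j. j = i)) = - sign_dot c y"
        unfolding sign_dot_def by (cases "even (card ?A)") simp_all
      thus ?thesis using True by simp
    next
      case yf: False
      hence "?B = insert i ?A" using True by (auto simp: bxor_def)
      moreover have "i \<notin> ?A" using yf by simp
      ultimately have "card ?B = card ?A + 1" by simp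
      hence "odd (card ?B) \<longleftrightarrow> even (card ?A)" by (metis even_Suc Suc_eq_plus1)
      hence "sign_dot c (bxor y (\<lambda>j. j = i)) = - sign_dot c y"
        unfolding sign_dot_def by (cases "even (card ?A)") simp_all
      thus ?thesis using True by simp
    qed
  qed
qed

lemma sign_dot_sq: "sign_dot c y * sign_dot c y = 1"
  by (simp add: sign_dot_def)

lemma cnj_sign_dot: "cnj (sign_dot c y) = sign_dot c y"
  by (simp add: sign_dot_def)

lemma bxor_zero: "bxor y (\<lambda>_. False) = y"
  by (simp add: bxor_def)

lemma stab_on_Zc:
  assumes "graph_stab R i s = s"
  shows "graph_stab R i (pauli (\<lambda>_. False) c s) = (\<lambda>y. (if c i then -1 else 1) * pauli (\<lambda>_. False) c s y)"
proof
  fix y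
  have e: "s y = sign_dot (R i) (bxor y (\<lambda>j. j = i)) * s (bxor y (\<lambda>j. j = i))"
    using fun_cong[OF assms, of y] by (simp add: graph_stab_def pauli_def)
  show "graph_stab R i (pauli (\<lambda>_. False) c s) y = (if c i then -1 else 1) * pauli (\<lambda>_. False) c s y"
  proof -
    let ?y = "bxor y (\<lambda>j. j = i)"
    have "graph_stab R i (pauli (\<lambda>_. False) c s) y = sign_dot (R i) ?y * (sign_dot c ?y * s ?y)"
      unfolding graph_stab_def pauli_def bxor_zero ..
    also have "\<dots> = (if c i then -1 else 1) * sign_dot c y * (sign_dot (R i) ?y * s ?y)"
      unfolding sign_dot_flip[of c y i] by (simp only: mult_ac)
    also have "\<dots> = (if c i then -1 else 1) * pauli (\<lambda>_. False) c s y"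
      unfolding pauli_def bxor_zero e[symmetric] by (simp only: mult_ac)
    finally show ?thesis .
  qed
qed

lemma qinner_self_nz:
  assumes "s \<noteq> (\<lambda>_. 0)"
  shows "qinner (s::'n::finite state) s \<noteq> 0"
proof -
  obtain x where x: "s x \<noteq> 0" using assms by auto
  have "Re (qinner s s) = (\<Sum>y\<in>UNIV. (cmod (s y))^2)"
    unfolding qinner_def by (simp add: Re_sum, simp add: cmod_power2, simp add: power2_eq_square)
  also have "\<dots> > 0"
    by (rule sum_pos2[of UNIV x]) (use x in auto)
  finally show ?thesis by auto
qed

lemma qinner_Zc: "qinner (pauli (\<lambda>_. False) c s) (pauli (\<lambda>_. False) c s) = qinner s s"
  unfolding qinner_def pauli_def bxor_zero
  by (rule sum.cong) (auto simp: cnj_sign_dot algebra_simps sign_dot_def)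

lemma Zc_in_code:
  assumes "c \<in> C"
  shows "pauli (\<lambda>_. False) c s \<in> cws_code R s (C::('n::finite \<Rightarrow> bool) set)"
proof -
  have eq: "(\<lambda>x. \<Sum>d\<in>C. (if d = c then 1 else 0) * pauli (\<lambda>_. False) d s x) = pauli (\<lambda>_. False) c s"
  proof
    fix x
    have "(\<Sum>d\<in>C. (if d = c then 1 else 0) * pauli (\<lambda>_. False) d s x)
        = (\<Sum>d\<in>C. (if d = c then pauli (\<lambda>_. False) d s x else 0))"
      by (rule sum.cong) simp_all
    also have "\<dots> = pauli (\<lambda>_. False) c s x"
      using assms by (simp add: sum.delta[OF finite])
    finally show "(\<Sum>d\<in>C. (if d = c then 1 else 0) * pauli (\<lambda>_. False) d s x) = pauli (\<lambda>_. False) c s x" .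
  qed
  show ?thesis unfolding cws_code_def mem_Collect_eq
    by (rule exI[where x="\<lambda>d. if d = c then 1 else 0"]) (simp only: eq simp_thms)
qed

theorem corollary1:
  fixes R :: "'n::finite \<Rightarrow> 'n \<Rightarrow> bool"
    and C :: "('n \<Rightarrow> bool) set"
    and s :: "'n state"
    and r :: nat
  assumes "\<forall>i j. R i j = R j i"
    and "\<forall>i. \<not> R i i"
    and "\<forall>i. card {j. R i j} = r"
    and "card C \<ge> 2"
    and "is_graph_state R s"
  shows "qdistance (cws_code R s C) \<le> enat (r + 1)"
proof -
  obtain c1 c2 where c: "c1 \<in> C" "c2 \<in> C" "c1 \<noteq> c2"
    using assms(4) by (metis One_nat_def card_le_Suc_iff numeral_2_eq_2 insertCI)
  then obtain i where i: "c1 i \<noteq> c2 i" by auto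
  have st: "graph_stab R i s = s" and snz: "s \<noteq> (\<lambda>_. 0)"
    using assms(5) by (auto simp: is_graph_state_def)
  have w: "pauli_weight (\<lambda>j. j = i) (R i) = r + 1"
  proof -
    have "{j. j = i \<or> R i j} = insert i {j. R i j}" by auto
    thus ?thesis using assms(2,3) by (simp add: pauli_weight_def)
  qed
  have nd: "\<not> detectable (cws_code R s C) (pauli (\<lambda>j. j = i) (R i))"
  proof
    assume "detectable (cws_code R s C) (pauli (\<lambda>j. j = i) (R i))"
    then obtain k where k: "\<forall>\<phi>\<in>cws_code R s C. \<forall>\<psi>\<in>cws_code R s C.
        qinner \<phi> (pauli (\<lambda>j. j = i) (R i) \<psi>) = k * qinner \<phi> \<psi>"
      unfolding detectable_def by blast
    have h: "(if c i then -1 else 1) * qinner s s = k * qinner s s" if "c \<in> C" for c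
    proof -
      let ?p = "pauli (\<lambda>_. False) c s"
      have "qinner ?p (pauli (\<lambda>j. j = i) (R i) ?p) = k * qinner ?p ?p"
        using k Zc_in_code[OF that] by blast
      moreover have "pauli (\<lambda>j. j = i) (R i) ?p = (\<lambda>y. (if c i then -1 else 1) * ?p y)"
        using stab_on_Zc[OF st] by (simp add: graph_stab_def)
      moreover have "qinner ?p (\<lambda>y. a * ?p y) = a * qinner ?p ?p" for a
        unfolding qinner_def by (simp add: sum_distrib_left algebra_simps)
      ultimately show ?thesis by (simp add: qinner_Zc)
    qed
    from h[OF c(1)] h[OF c(2)] qinner_self_nz[OF snz] i show False
      by (cases "c1 i") auto
  qed
  hence "enat (pauli_weight (\<lambda>j. j = i) (R i)) \<in>
      {enat (pauli_weight v u) | v u. \<not> detectable (cws_code R s C) (pauli v u)}" by blast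
  hence "qdistance (cws_code R s C) \<le> enat (pauli_weight (\<lambda>j. j = i) (R i))"
    unfolding qdistance_def by (rule Inf_lower)
  thus ?thesis using w by simp
qed

end
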